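(* Let $x_1,x_2,y_1,y_2\in\mathbb{R}$, $d>0$, and $$f(x)=\big((x-x_1)^2+y_1^2+d^2\big)\big((x-x_2)^2+y_2^2+d^2\big),\quad x\in\mathbb{R}.$$ If $|y_1|\le|y_2|$, then the optimal (minimizing) antenna location $x^*$ of $f$ satisfies $|x^*-x_1|\le|x^*-x_2|$ (i.e., it is closer to user 1); otherwise ($|y_1|>|y_2|$), $|x^*-x_1|\ge|x^*-x_2|$. (Here $x^*$ is understood as a global minimizer of $f$ that can be chosen with the stated property.)
   Context: $f$ is the high-SNR approximation of the two-user TDMA sum-throughput maximization objective for a pinching antenna at $(x,0,d)$ serving users at $(x_1,y_1,0)$ and $(x_2,y_2,0)$: maximizing throughput is approximated by minimizing $f$. *)

theory Defs
  imports Complex_Main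
begin

text \<open>High-SNR TDMA objective for a pinching antenna at (x,0,d) and users at (x1,y1,0), (x2,y2,0).\<close>
definition pa_obj :: "real \<Rightarrow> real \<Rightarrow> real \<Rightarrow> real \<Rightarrow> real \<Rightarrow> real \<Rightarrow> real" where
  "pa_obj x1 y1 x2 y2 d x = ((x - x1)^2 + y1^2 + d^2) * ((x - x2)^2 + y2^2 + d^2)"

end

theory Submission
  imports Defs "HOL-Analysis.Analysis"
begin

lemma exmin:
  fixes x1 x2 y1 y2 d :: real
  assumes "d > 0"
  shows "\<exists>m. \<forall>x. pa_obj x1 y1 x2 y2 d m \<le> pa_obj x1 y1 x2 y2 d x"
proof -
  define f where "f = pa_obj x1 y1 x2 y2 d"
  define b where "b = y2^2 + d^2"
  have bpos: "b > 0" using assms unfolding b_def by (simp add: add_nonneg_pos)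
  define r where "r = f x1 / b + 1"
  have f0: "f x1 \<ge> 0" unfolding f_def pa_obj_def by simp
  have r1: "r \<ge> 1" unfolding r_def using f0 bpos by simp
  have low: "f x \<ge> (x - x1)^2 * b" for x
  proof -
    have "(x - x1)^2 * b \<le> ((x - x1)^2 + y1^2 + d^2) * b"
      using bpos by (intro mult_right_mono) auto
    also have "\<dots> \<le> ((x - x1)^2 + y1^2 + d^2) * ((x - x2)^2 + b)"
      by (intro mult_left_mono) (auto simp: b_def)
    finally show ?thesis unfolding f_def pa_obj_def b_def by (simp add: add.assoc)
  qed
  have cont: "continuous_on {x1 - r..x1 + r} f"
    unfolding f_def pa_obj_def by (intro continuous_intros)
  obtain m where m: "m \<in> {x1 - r..x1 + r}" and mm: "\<forall>y\<in>{x1 - r..x1 + r}. f m \<le> f y"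
    using continuous_attains_inf[OF compact_Icc _ cont] r1 by auto
  have "f m \<le> f x" for x
  proof (cases "x \<in> {x1 - r..x1 + r}")
    case True then show ?thesis using mm by auto
  next
    case False
    then have "\<bar>x - x1\<bar> > r" by auto
    then have "r^2 < \<bar>x - x1\<bar>^2" using r1
      by (intro power_strict_mono) auto
    then have "(x - x1)^2 > r^2" by simp
    moreover have "r^2 \<ge> r" using r1 by (simp add: power2_eq_square)
    ultimately have "(x - x1)^2 > f x1 / b" unfolding r_def by linarith
    then have "(x - x1)^2 * b > f x1" using bpos by (simp add: pos_divide_less_eq)
    then have "f x > f x1" using low[of x] by linarith
    moreover have "f m \<le> f x1" using mm r1 by auto
    ultimately show ?thesis by linarith
  qed
  then show ?thesis unfolding f_def by blast
qed

theorem lemma4: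
  fixes x1 x2 y1 y2 d :: real
  assumes "d > 0"
  shows "\<exists>xs. (\<forall>x. pa_obj x1 y1 x2 y2 d xs \<le> pa_obj x1 y1 x2 y2 d x) \<and>
           (if \<bar>y1\<bar> \<le> \<bar>y2\<bar> then \<bar>xs - x1\<bar> \<le> \<bar>xs - x2\<bar>
            else \<bar>xs - x1\<bar> \<ge> \<bar>xs - x2\<bar>)"
proof -
  obtain m where m: "\<forall>x. pa_obj x1 y1 x2 y2 d m \<le> pa_obj x1 y1 x2 y2 d x"
    using exmin[OF assms] by blast
  define m' where "m' = x1 + x2 - m"
  have e1: "(m' - x1)^2 = (m - x2)^2" "(m' - x2)^2 = (m - x1)^2"
    unfolding m'_def by (simp_all add: power2_eq_square algebra_simps)
  have diff: "pa_obj x1 y1 x2 y2 d m - pa_obj x1 y1 x2 y2 d m'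
      = ((m - x1)^2 - (m - x2)^2) * ((y2^2 + d^2) - (y1^2 + d^2))"
    unfolding pa_obj_def e1 by (simp add: algebra_simps)
  have sq: "\<bar>u\<bar> \<le> \<bar>v\<bar> \<longleftrightarrow> u^2 \<le> v^2" for u v :: real
    by (simp add: abs_le_square_iff)
  show ?thesis
  proof (cases "\<bar>y1\<bar> \<le> \<bar>y2\<bar>")
    case True
    hence yy: "y1^2 \<le> y2^2" using sq by blast
    show ?thesis
    proof (cases "\<bar>m - x1\<bar> \<le> \<bar>m - x2\<bar>")
      case True then show ?thesis using m \<open>\<bar>y1\<bar> \<le> \<bar>y2\<bar>\<close> by auto
    next
      case False
      hence "(m - x2)^2 \<le> (m - x1)^2" using sq by (meson linear)
      hence "pa_obj x1 y1 x2 y2 d m - pa_obj x1 y1 x2 y2 d m' \<ge> 0"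
        unfolding diff using yy by (intro mult_nonneg_nonneg) auto
      hence "\<forall>x. pa_obj x1 y1 x2 y2 d m' \<le> pa_obj x1 y1 x2 y2 d x" using m by (meson diff_ge_0_iff_ge order_trans)
      moreover have "\<bar>m' - x1\<bar> \<le> \<bar>m' - x2\<bar>" using sq e1 \<open>(m - x2)^2 \<le> (m - x1)^2\<close> by metis
      ultimately show ?thesis using \<open>\<bar>y1\<bar> \<le> \<bar>y2\<bar>\<close> by auto
    qed
  next
    case False
    hence yy: "y2^2 \<le> y1^2" using sq by (meson linear)
    show ?thesis
    proof (cases "\<bar>m - x2\<bar> \<le> \<bar>m - x1\<bar>")
      case True then show ?thesis using m False by auto
    next
      case F2: False
      hence "(m - x1)^2 \<le> (m - x2)^2" using sq by (meson linear)
      hence "pa_obj x1 y1 x2 y2 d m - pa_obj x1 y1 x2 y2 d m' \<ge> 0"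
        unfolding diff using yy by (intro mult_nonpos_nonpos) auto
      hence "\<forall>x. pa_obj x1 y1 x2 y2 d m' \<le> pa_obj x1 y1 x2 y2 d x" using m by (meson diff_ge_0_iff_ge order_trans)
      moreover have "\<bar>m' - x2\<bar> \<le> \<bar>m' - x1\<bar>" using sq e1 \<open>(m - x1)^2 \<le> (m - x2)^2\<close> by metis
      ultimately show ?thesis using False by auto
    qed
  qed
qed

end
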